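(* Let $n\ge1$, identify $\mathbb{R}^{n+1}=\mathbb{R}^n\times\mathbb{R}$, let $f\colon\mathbb{R}^n\to(0,\infty)$ be continuous with epigraph $L=\{(x,y)\mid f(x)\le y\}$, and let $K\subset\mathbb{R}^{n+1}$ be a nonempty closed set with $K\cap L=\emptyset$ containing a point $(x_*,y_* )$ with $y_*\le 0$. Then the upper equidistant function $G^+$ associated with $K$ and $L$ is upper semi-continuous and the lower equidistant function $G^-$ is lower semi-continuous on $\mathbb{R}^n$.
   Context: $d(p,A)=\inf\{|p-q|\mid q\in A\}$ (Euclidean distance). $G^+(x)=\sup\{y\in\mathbb{R}\mid d((x,y),K)=d((x,y),L)\}$ and $G^-(x)=\inf\{y\in\mathbb{R}\mid d((x,y),K)=d((x,y),L)\}$ (under the stated assumptions these sets are nonempty and bounded, so $G^\pm(x)$ are real numbers). *)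

theory Defs
  imports "HOL-Analysis.Analysis"
begin

text \<open>Points of R^(n+1) are pairs (x,y) with x in R^n and y in R; the product
  norm on 'a \<times> real is the Euclidean norm. d(p,A) is infdist p A.\<close>

definition G_plus :: "('a::euclidean_space \<times> real) set \<Rightarrow> ('a \<times> real) set \<Rightarrow> 'a \<Rightarrow> real" where
  "G_plus K L x = Sup {y. infdist (x, y) K = infdist (x, y) L}"

definition G_minus :: "('a::euclidean_space \<times> real) set \<Rightarrow> ('a \<times> real) set \<Rightarrow> 'a \<Rightarrow> real" where
  "G_minus K L x = Inf {y. infdist (x, y) K = infdist (x, y) L}"

definition upper_semicontinuous :: "('a::topological_space \<Rightarrow> real) \<Rightarrow> bool" where
  "upper_semicontinuous g \<longleftrightarrow> (\<forall>a. open {x. g x < a})"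

definition lower_semicontinuous :: "('a::topological_space \<Rightarrow> real) \<Rightarrow> bool" where
  "lower_semicontinuous g \<longleftrightarrow> (\<forall>a. open {x. g x > a})"

end

theory Submission
  imports Defs
begin

lemma closed_local:
  fixes S :: "'a::metric_space set"
  assumes "\<And>x. closed (S \<inter> cball x 1)"
  shows "closed S"
  unfolding closed_def open_contains_ball
proof
  fix x assume "x \<in> - S"
  have "open (- (S \<inter> cball x 1))" using assms[of x] by (simp only: open_Compl)
  moreover have "x \<in> - (S \<inter> cball x 1)" using \<open>x \<in> - S\<close> by auto
  ultimately obtain e where e: "e > 0" "ball x e \<subseteq> - (S \<inter> cball x 1)"
    by (meson open_contains_ball)
  have "ball x (min e 1) \<subseteq> - S"
  proof
    fix y assume "y \<in> ball x (min e 1)"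
    then have "y \<in> ball x e" "y \<in> cball x 1" by auto
    then show "y \<in> - S" using e by auto
  qed
  then show "\<exists>e>0. ball x e \<subseteq> - S" using e by (intro exI[of _ "min e 1"]) auto
qed

lemma lower_bound:
  fixes f :: "'a::euclidean_space \<Rightarrow> real"
  assumes f_cont: "continuous_on UNIV f"
    and f_pos: "\<And>x. f x > 0"
    and L_def: "L = {(x, y). f x \<le> y}"
    and xsK: "(xs, ys) \<in> K" and ys: "ys \<le> 0"
  shows "\<exists>M. \<forall>x\<in>cball x0 r. \<forall>y. y \<le> -M \<longrightarrow> infdist (x,y) K < infdist (x,y) L"
proof -
  define R where "R = dist x0 xs + \<bar>r\<bar>"
  have R0: "R \<ge> 0" unfolding R_def by simp
  obtain zm where zm: "zm \<in> cball x0 (2*R+1)" "\<forall>z\<in>cball x0 (2*R+1). f zm \<le> f z"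
  proof -
    have c: "continuous_on (cball x0 (2*R+1)) f" using f_cont by (rule continuous_on_subset) simp
    have ne: "cball x0 (2*R+1) \<noteq> {}" using R0 by simp
    have "\<exists>zm\<in>cball x0 (2*R+1). \<forall>z\<in>cball x0 (2*R+1). f zm \<le> f z"
      using continuous_attains_inf[OF compact_cball ne c] .
    then show ?thesis using that by metis
  qed
  define m where "m = f zm"
  have m0: "m > 0" using f_pos m_def by simp
  define M where "M = max (-ys) ((R^2+1)/(2*m)) + 1"
  have "\<forall>x\<in>cball x0 r. \<forall>y. y \<le> -M \<longrightarrow> infdist (x,y) K < infdist (x,y) L"
  proof (intro ballI allI impI)
    fix x y assume x: "x \<in> cball x0 r" and y: "y \<le> -M"
    define s where "s = -y"
    have mx: "-ys \<le> max (-ys) ((R^2+1)/(2*m))" "(R^2+1)/(2*m) \<le> max (-ys) ((R^2+1)/(2*m))"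
      by simp_all
    have s1: "s \<ge> -ys" "s \<ge> (R^2+1)/(2*m)" "s > 0" using y mx ys unfolding s_def M_def
      by linarith+
    have sm: "R^2 + 1 \<le> 2 * (s * m)" using s1(2) m0 by (simp add: pos_divide_le_eq mult.commute mult.left_commute)
    have dx: "dist x xs \<le> R" using x unfolding R_def
      using dist_triangle[of x xs x0] abs_ge_self[of r] by (simp add: dist_commute)
    have dx0: "dist x0 x \<le> R" using x zero_le_dist[of x0 xs] abs_ge_self[of r] unfolding R_def mem_cball by linarith
    have "infdist (x,y) K \<le> dist (x,y) (xs,ys)" using xsK by (rule infdist_le)
    also have "\<dots> = sqrt ((dist x xs)^2 + (dist y ys)^2)" by (simp add: dist_Pair_Pair)
    also have "\<dots> < sqrt (s^2 + R^2 + 1)"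
    proof -
      have "(dist x xs)^2 \<le> R^2" using power_mono[OF dx zero_le_dist] .
      moreover have "(dist y ys)^2 \<le> s^2"
      proof -
        have "\<bar>y - ys\<bar> \<le> s" using s1 ys unfolding s_def by auto
        then have "\<bar>y - ys\<bar>^2 \<le> s^2" using power_mono abs_ge_zero by blast
        then show ?thesis by (simp add: dist_real_def)
      qed
      ultimately have "(dist x xs)^2 + (dist y ys)^2 < s^2 + R^2 + 1" by linarith
      then show ?thesis using real_sqrt_less_iff by blast
    qed
    also have "\<dots> \<le> infdist (x,y) L"
    proof -
      have Lne: "L \<noteq> {}" using L_def by auto
      have "\<forall>q\<in>L. sqrt (s^2 + R^2 + 1) \<le> dist (x,y) q"
      proof
        fix q assume q: "q \<in> L"
        obtain z w where qz: "q = (z,w)" "f z \<le> w" using q L_def by auto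
        have fz: "f z > 0" by (rule f_pos)
        have "s^2 + R^2 + 1 \<le> (dist x z)^2 + (dist y w)^2"
        proof (cases "dist x z \<ge> R + 1")
          case True
          then have "(R+1)^2 \<le> (dist x z)^2" using R0 power_mono[of "R+1" "dist x z" 2] by linarith
          moreover have "(R+1)^2 = R^2 + 2*R + 1" by (simp add: power2_eq_square algebra_simps)
          moreover have "s^2 \<le> (dist y w)^2"
          proof -
            have "s \<le> \<bar>y - w\<bar>" using qz fz abs_ge_minus_self[of "y-w"] unfolding s_def by linarith
            then have "s^2 \<le> \<bar>y - w\<bar>^2" using s1 power_mono[of s "\<bar>y - w\<bar>" 2] by linarith
            then show ?thesis by (simp add: dist_real_def)
          qed
          ultimately show ?thesis using R0 by linarith
        next
          case False
          then have "z \<in> cball x0 (2*R+1)" using dx0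
            using dist_triangle[of x0 z x] by simp
          then have "m \<le> f z" using zm m_def by auto
          then have "m + s \<le> \<bar>y - w\<bar>" using qz abs_ge_minus_self[of "y-w"] unfolding s_def by linarith
          then have "(m+s)^2 \<le> \<bar>y - w\<bar>^2" using m0 s1 power_mono[of "m+s" "\<bar>y - w\<bar>" 2] by linarith
          then have h1: "(m+s)^2 \<le> (dist y w)^2" by (simp add: dist_real_def)
          have "(m+s)^2 = m*m + 2*(s*m) + s^2" by (simp add: power2_eq_square algebra_simps)
          moreover have "m*m \<ge> 0" by simp
          ultimately have "s^2 + R^2 + 1 \<le> (m+s)^2"
            using sm by linarith
          then show ?thesis using h1 zero_le_power2[of "dist x z"] by linarith
        qed
        then show "sqrt (s^2 + R^2 + 1) \<le> dist (x,y) q"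
          by (simp add: qz dist_Pair_Pair)
      qed
      then show ?thesis using Lne by (simp add: infdist_notempty cINF_greatest)
    qed
    finally show "infdist (x,y) K < infdist (x,y) L" .
  qed
  then show ?thesis by blast
qed


theorem corollary4:
  fixes f :: "real ^ 'n \<Rightarrow> real"
    and K L :: "((real ^ 'n) \<times> real) set"
  assumes f_cont: "continuous_on UNIV f"
    and f_pos: "\<And>x. f x > 0"
    and L_def: "L = {(x, y). f x \<le> y}"
    and K_ne: "K \<noteq> {}"
    and K_closed: "closed K"
    and KL_disj: "K \<inter> L = {}"
    and K_low: "\<exists>xs ys. (xs, ys) \<in> K \<and> ys \<le> 0"
  shows "upper_semicontinuous (G_plus K L) \<and> lower_semicontinuous (G_minus K L)"
proof -
  obtain xs ys where xsK: "(xs,ys) \<in> K" and ys: "ys \<le> 0" using K_low by blast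
  define E where "E = {p. infdist p K = infdist p L}"
  have Eclosed: "closed E" unfolding E_def by (intro closed_Collect_eq continuous_intros)
  have up: "y < f x" if "(x,y) \<in> E" for x y
  proof (rule ccontr)
    assume "\<not> y < f x"
    then have inL: "(x,y) \<in> L" using L_def by simp
    then have "(x,y) \<notin> K" using KL_disj by blast
    then have "infdist (x,y) K > 0" using infdist_pos_not_in_closed K_closed K_ne by blast
    moreover have "infdist (x,y) L = 0" using inL by simp
    ultimately show False using that unfolding E_def by simp
  qed
  have low: "\<exists>M. \<forall>x\<in>cball x0 r. \<forall>y. (x,y) \<in> E \<longrightarrow> -M < y" for x0 r
  proof -
    obtain M where M: "\<forall>x\<in>cball x0 r. \<forall>y. y \<le> -M \<longrightarrow> infdist (x,y) K < infdist (x,y) L"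
      using lower_bound[OF f_cont f_pos L_def xsK ys] by blast
    have "\<forall>x\<in>cball x0 r. \<forall>y. (x,y) \<in> E \<longrightarrow> -M < y"
    proof (intro ballI allI impI)
      fix x y assume xy: "x \<in> cball x0 r" "(x,y) \<in> E"
      show "-M < y"
      proof (rule ccontr)
        assume "\<not> -M < y"
        then have "y \<le> -M" by simp
        then have "infdist (x,y) K < infdist (x,y) L" using M xy(1) by blast
        then show False using xy(2) unfolding E_def by simp
      qed
    qed
    then show ?thesis by blast
  qed
  define Ex where "Ex x = {y. (x,y) \<in> E}" for x
  have Ex_closed: "closed (Ex x)" for x
    unfolding Ex_def E_def by (simp, intro closed_Collect_eq continuous_intros)
  have Ex_ne: "Ex x \<noteq> {}" for x
  proof -
    obtain M where M: "\<forall>x'\<in>cball x 0. \<forall>y. y \<le> -M \<longrightarrow> infdist (x',y) K < infdist (x',y) L"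
      using lower_bound[OF f_cont f_pos L_def xsK ys] by blast
    define h where "h y = infdist (x,y) K - infdist (x,y) L" for y
    define a where "a = min (-M) (f x)"
    have "a \<le> -M" unfolding a_def by simp
    moreover have "x \<in> cball x 0" by simp
    ultimately have "infdist (x,a) K < infdist (x,a) L" using M by blast
    then have ha: "h a \<le> 0" unfolding h_def by simp
    have hf: "0 \<le> h (f x)" unfolding h_def using L_def infdist_nonneg[of "(x, f x)" K] by simp
    have c: "continuous_on {a..f x} h" unfolding h_def by (intro continuous_intros)
    obtain y where "h y = 0" using IVT'[of h a 0 "f x", OF ha hf _ c] a_def by auto
    then have "y \<in> Ex x" unfolding h_def Ex_def E_def by simp
    then show ?thesis by blast
  qed
  have bda: "bdd_above (Ex x)" for x
    unfolding bdd_above_def Ex_def using up by (metis less_imp_le mem_Collect_eq)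
  have bdb: "bdd_below (Ex x)" for x
  proof -
    obtain M where "\<forall>x'\<in>cball x 0. \<forall>y. (x',y) \<in> E \<longrightarrow> -M < y" using low by blast
    then have "\<forall>y\<in>Ex x. -M \<le> y" unfolding Ex_def by force
    then show ?thesis unfolding bdd_below_def by blast
  qed
  have Gp: "G_plus K L x = Sup (Ex x)" for x by (simp add: G_plus_def Ex_def E_def)
  have Gm: "G_minus K L x = Inf (Ex x)" for x by (simp add: G_minus_def Ex_def E_def)
  have Gp_in: "(x, G_plus K L x) \<in> E" for x
    using closed_contains_Sup[OF Ex_ne bda Ex_closed] Gp unfolding Ex_def by simp
  have Gm_in: "(x, G_minus K L x) \<in> E" for x
    using closed_contains_Inf[OF Ex_ne bdb Ex_closed] Gm unfolding Ex_def by simp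
  have Gp_ge: "y \<le> G_plus K L x" if "(x,y) \<in> E" for x y
    using cSup_upper[OF _ bda, of y x] that Gp unfolding Ex_def by simp
  have Gm_le: "G_minus K L x \<le> y" if "(x,y) \<in> E" for x y
    using cInf_lower[OF _ bdb, of y x] that Gm unfolding Ex_def by simp
  have cfst: "continuous_on X fst" for X :: "((real ^ 'n) \<times> real) set"
    by (intro continuous_intros)
  have clU: "closed {x. a \<le> G_plus K L x}" for a
  proof (rule closed_local)
    fix x0 :: "real ^ 'n"
    obtain xb where xb: "xb \<in> cball x0 1" "\<forall>z\<in>cball x0 1. f z \<le> f xb"
    proof -
      have c: "continuous_on (cball x0 1) f" using f_cont by (rule continuous_on_subset) simp
      have ne: "cball x0 1 \<noteq> {}" by simp
      have "\<exists>xb\<in>cball x0 1. \<forall>z\<in>cball x0 1. f z \<le> f xb"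
        using continuous_attains_sup[OF compact_cball ne c] .
      then show ?thesis using that by metis
    qed
    have eq: "{x. a \<le> G_plus K L x} \<inter> cball x0 1 = fst ` (E \<inter> (cball x0 1 \<times> {a..f xb}))"
    proof
      show "{x. a \<le> G_plus K L x} \<inter> cball x0 1 \<subseteq> fst ` (E \<inter> (cball x0 1 \<times> {a..f xb}))"
      proof
        fix x assume x: "x \<in> {x. a \<le> G_plus K L x} \<inter> cball x0 1"
        have "G_plus K L x < f x" using up[OF Gp_in] .
        moreover have "f x \<le> f xb" using xb x by blast
        ultimately have "(x, G_plus K L x) \<in> E \<inter> (cball x0 1 \<times> {a..f xb})"
          using Gp_in x by auto
        then show "x \<in> fst ` (E \<inter> (cball x0 1 \<times> {a..f xb}))" by (metis fst_conv image_eqI)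
      qed
      show "fst ` (E \<inter> (cball x0 1 \<times> {a..f xb})) \<subseteq> {x. a \<le> G_plus K L x} \<inter> cball x0 1"
        using Gp_ge by fastforce
    qed
    have "compact (fst ` (E \<inter> (cball x0 1 \<times> {a..f xb})))"
      by (intro compact_continuous_image cfst closed_Int_compact Eclosed compact_Times compact_cball compact_Icc)
    then show "closed ({x. a \<le> G_plus K L x} \<inter> cball x0 1)" unfolding eq by (rule compact_imp_closed)
  qed
  have clL: "closed {x. G_minus K L x \<le> a}" for a
  proof (rule closed_local)
    fix x0 :: "real ^ 'n"
    obtain M where M: "\<forall>x\<in>cball x0 1. \<forall>y. (x,y) \<in> E \<longrightarrow> -M < y" using low by blast
    have eq: "{x. G_minus K L x \<le> a} \<inter> cball x0 1 = fst ` (E \<inter> (cball x0 1 \<times> {-M..a}))"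
    proof
      show "{x. G_minus K L x \<le> a} \<inter> cball x0 1 \<subseteq> fst ` (E \<inter> (cball x0 1 \<times> {-M..a}))"
      proof
        fix x assume x: "x \<in> {x. G_minus K L x \<le> a} \<inter> cball x0 1"
        have "-M < G_minus K L x" using M Gm_in x by blast
        then have "(x, G_minus K L x) \<in> E \<inter> (cball x0 1 \<times> {-M..a})"
          using Gm_in x by auto
        then show "x \<in> fst ` (E \<inter> (cball x0 1 \<times> {-M..a}))" by (metis fst_conv image_eqI)
      qed
      show "fst ` (E \<inter> (cball x0 1 \<times> {-M..a})) \<subseteq> {x. G_minus K L x \<le> a} \<inter> cball x0 1"
        using Gm_le by fastforce
    qed
    have "compact (fst ` (E \<inter> (cball x0 1 \<times> {-M..a})))"
      by (intro compact_continuous_image cfst closed_Int_compact Eclosed compact_Times compact_cball compact_Icc)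
    then show "closed ({x. G_minus K L x \<le> a} \<inter> cball x0 1)" unfolding eq by (rule compact_imp_closed)
  qed
  have "upper_semicontinuous (G_plus K L)"
    unfolding upper_semicontinuous_def
  proof
    fix a
    have "{x. G_plus K L x < a} = - {x. a \<le> G_plus K L x}" by auto
    then show "open {x. G_plus K L x < a}" using clU[of a] by (simp add: open_Compl)
  qed
  moreover have "lower_semicontinuous (G_minus K L)"
    unfolding lower_semicontinuous_def
  proof
    fix a
    have "{x. a < G_minus K L x} = - {x. G_minus K L x \<le> a}" by auto
    then show "open {x. a < G_minus K L x}" using clL[of a] by (simp add: open_Compl)
  qed
  ultimately show ?thesis ..
qed

end
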